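(* Consider regression data $\boldsymbol Z$, an $n\times(p+1)$ matrix whose $i$-th row is $(x_{i1},\ldots,x_{ip},y_i)$, and let $\boldsymbol X$ be the $n\times(p+1)$ design matrix with rows $(1,\boldsymbol x_i^{\top})$, $\boldsymbol x_i=(x_{i1},\ldots,x_{ip})^\top$, and $\boldsymbol y=(y_1,\ldots,y_n)^\top$. Let $\widehat{\boldsymbol\gamma}$ be a regression estimator, assigning to every such dataset a vector $\widehat{\boldsymbol\gamma}=(\hat\alpha,\hat\beta_1,\ldots,\hat\beta_p)^\top\in\mathbb R^{p+1}$, satisfying: if $y_i=(1,\boldsymbol x_i^{\top})\boldsymbol\gamma_0$ for all $i=1,\ldots,n$ for some $\boldsymbol\gamma_0\in\mathbb R^{p+1}$, and the rows of $\boldsymbol X$ do not lie in a lower-dimensional subspace, then $\widehat{\boldsymbol\gamma}=\boldsymbol\gamma_0$. Then for any dataset $\boldsymbol Z$, $$\varepsilon^*_n(\widehat{\boldsymbol\gamma},\boldsymbol Z)\leqslant\left\lceil\frac{n-1}{p+1}\right\rceil\Big/n .$$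
   Context: For an integer $m\ge0$, $\boldsymbol Z^m$ denotes any matrix obtained from $\boldsymbol Z$ by replacing at most $m$ cells in each column of $\boldsymbol Z$ (covariate columns and the response column) by arbitrary real values. The finite-sample cellwise breakdown value of $\widehat{\boldsymbol\gamma}$ at $\boldsymbol Z$ is $\varepsilon^*_n(\widehat{\boldsymbol\gamma},\boldsymbol Z)=\min\{\tfrac{m}{n}:\ \sup_{\boldsymbol Z^m}\|\widehat{\boldsymbol\gamma}(\boldsymbol Z^m)-\widehat{\boldsymbol\gamma}(\boldsymbol Z)\|=\infty\}$. *)

theory Defs
  imports Complex_Main
begin

text \<open>Regression data with n observations and p covariates is represented as
  Z :: nat => nat => real, where for i < n:
  Z i j (j < p) is the covariate x_{i,j+1}, and Z i p is the response y_i.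
  Entries outside the range i < n, j <= p are irrelevant junk.
  A coefficient vector gamma = (alpha, beta_1, ..., beta_p) is a function
  nat => real with gamma 0 = alpha and gamma (j+1) = beta_{j+1}, on indices 0..p.
  A regression estimator is a map from datasets to coefficient vectors.\<close>

definition design :: "nat \<Rightarrow> (nat \<Rightarrow> nat \<Rightarrow> real) \<Rightarrow> nat \<Rightarrow> nat \<Rightarrow> real" where
  "design p Z i k = (if k = 0 then 1 else Z i (k - 1))"

definition rows_in_proper_subspace :: "nat \<Rightarrow> nat \<Rightarrow> (nat \<Rightarrow> nat \<Rightarrow> real) \<Rightarrow> bool" where
  "rows_in_proper_subspace n p Z \<longleftrightarrow>
     (\<exists>v :: nat \<Rightarrow> real. (\<exists>k\<le>p. v k \<noteq> 0) \<and>
        (\<forall>i<n. (\<Sum>k\<le>p. design p Z i k * v k) = 0))"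

definition exact_fit :: "nat \<Rightarrow> nat \<Rightarrow> (nat \<Rightarrow> nat \<Rightarrow> real) \<Rightarrow> (nat \<Rightarrow> real) \<Rightarrow> bool" where
  "exact_fit n p Z g \<longleftrightarrow> (\<forall>i<n. Z i p = (\<Sum>k\<le>p. design p Z i k * g k))"

definition exact_fit_property ::
  "nat \<Rightarrow> nat \<Rightarrow> ((nat \<Rightarrow> nat \<Rightarrow> real) \<Rightarrow> nat \<Rightarrow> real) \<Rightarrow> bool" where
  "exact_fit_property n p est \<longleftrightarrow>
     (\<forall>Z g. exact_fit n p Z g \<and> \<not> rows_in_proper_subspace n p Z \<longrightarrow>
        (\<forall>k\<le>p. est Z k = g k))"

definition cellwise_contaminated ::
  "nat \<Rightarrow> nat \<Rightarrow> nat \<Rightarrow> (nat \<Rightarrow> nat \<Rightarrow> real) \<Rightarrow> (nat \<Rightarrow> nat \<Rightarrow> real) \<Rightarrow> bool" where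
  "cellwise_contaminated n p m Z Z' \<longleftrightarrow>
     (\<forall>i j. (n \<le> i \<or> p < j) \<longrightarrow> Z' i j = Z i j) \<and>
     (\<forall>j\<le>p. card {i. i < n \<and> Z' i j \<noteq> Z i j} \<le> m)"

definition coef_dist :: "nat \<Rightarrow> (nat \<Rightarrow> real) \<Rightarrow> (nat \<Rightarrow> real) \<Rightarrow> real" where
  "coef_dist p g h = sqrt (\<Sum>k\<le>p. (g k - h k)^2)"

definition cellwise_breaks ::
  "nat \<Rightarrow> nat \<Rightarrow> ((nat \<Rightarrow> nat \<Rightarrow> real) \<Rightarrow> nat \<Rightarrow> real) \<Rightarrow> (nat \<Rightarrow> nat \<Rightarrow> real) \<Rightarrow> nat \<Rightarrow> bool" where
  "cellwise_breaks n p est Z m \<longleftrightarrow>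
     (\<forall>B::real. \<exists>Z'. cellwise_contaminated n p m Z Z' \<and> coef_dist p (est Z') (est Z) > B)"

definition cellwise_breakdown ::
  "nat \<Rightarrow> nat \<Rightarrow> ((nat \<Rightarrow> nat \<Rightarrow> real) \<Rightarrow> nat \<Rightarrow> real) \<Rightarrow> (nat \<Rightarrow> nat \<Rightarrow> real) \<Rightarrow> real" where
  "cellwise_breakdown n p est Z = real (LEAST m. cellwise_breaks n p est Z m) / real n"

end

theory Submission
  imports Defs
begin

lemma block_dom:
  fixes M :: "nat \<Rightarrow> nat \<Rightarrow> real" and w :: "nat \<Rightarrow> real"
  assumes p0: "0 < p" and eq: "\<forall>q<p. (\<Sum>k<p. M q k * w k) = 0"
    and diag: "\<forall>q. 0 < q \<longrightarrow> q < p \<longrightarrow> K \<le> \<bar>M q q\<bar>" and d0: "\<mu> \<le> \<bar>M 0 0\<bar>"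
    and off: "\<forall>q<p. (\<Sum>k\<in>{..<p}-{q}. \<bar>M q k\<bar>) \<le> C"
    and CK: "C < K" and CCK: "C * C < \<mu> * K" and C0: "0 \<le> C" and mu0: "0 < \<mu>"
  shows "\<forall>k<p. w k = 0"
proof -
  define V where "V = Max ((\<lambda>k. \<bar>w k\<bar>) ` {..<p})"
  have fin: "finite ((\<lambda>k. \<bar>w k\<bar>) ` {..<p})" by simp
  have ne: "(\<lambda>k. \<bar>w k\<bar>) ` {..<p} \<noteq> {}" using p0 by auto
  have wV: "\<And>k. k < p \<Longrightarrow> \<bar>w k\<bar> \<le> V" unfolding V_def using fin by auto
  obtain k0 where k0: "k0 < p" "\<bar>w k0\<bar> = V"
    using Max_in[OF fin ne] unfolding V_def by auto
  have V0: "0 \<le> V" using k0 by auto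
  have K0: "0 < K" using CK C0 by linarith
  have key: "\<bar>M q q\<bar> * \<bar>w q\<bar> \<le> (\<Sum>k\<in>{..<p}-{q}. \<bar>M q k\<bar> * \<bar>w k\<bar>)" if q: "q < p" for q
  proof -
    have "(\<Sum>k<p. M q k * w k) = M q q * w q + (\<Sum>k\<in>{..<p}-{q}. M q k * w k)"
      using q by (simp add: sum.remove)
    then have "M q q * w q = - (\<Sum>k\<in>{..<p}-{q}. M q k * w k)" using eq q by simp
    then have "\<bar>M q q * w q\<bar> = \<bar>\<Sum>k\<in>{..<p}-{q}. M q k * w k\<bar>" by simp
    also have "\<dots> \<le> (\<Sum>k\<in>{..<p}-{q}. \<bar>M q k * w k\<bar>)" by (rule sum_abs)
    finally show ?thesis by (simp add: abs_mult)
  qed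
  have small: "\<bar>w q\<bar> \<le> C * V / K" if q: "0 < q" "q < p" for q
  proof -
    have "K * \<bar>w q\<bar> \<le> \<bar>M q q\<bar> * \<bar>w q\<bar>"
      using diag q by (simp add: mult_right_mono)
    also have "\<dots> \<le> (\<Sum>k\<in>{..<p}-{q}. \<bar>M q k\<bar> * \<bar>w k\<bar>)" using key q by simp
    also have "\<dots> \<le> (\<Sum>k\<in>{..<p}-{q}. \<bar>M q k\<bar> * V)"
      by (rule sum_mono) (auto intro: mult_left_mono wV)
    also have "\<dots> = (\<Sum>k\<in>{..<p}-{q}. \<bar>M q k\<bar>) * V" by (simp add: sum_distrib_right)
    also have "\<dots> \<le> C * V" using off q V0 by (simp add: mult_right_mono)
    finally have "K * \<bar>w q\<bar> \<le> C * V" .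
    then show ?thesis using K0 by (simp add: field_simps)
  qed
  show ?thesis
  proof (cases "V = 0")
    case True then show ?thesis using wV by fastforce
  next
    case False
    then have Vp: "0 < V" using V0 by simp
    have CVK: "C * V / K < V" using CK Vp K0 by (simp add: field_simps)
    have "k0 = 0"
    proof (rule ccontr)
      assume "k0 \<noteq> 0"
      then have "\<bar>w k0\<bar> \<le> C * V / K" using small[of k0] k0 by simp
      then show False using k0 CVK by simp
    qed
    have "\<mu> * V \<le> \<bar>M 0 0\<bar> * \<bar>w 0\<bar>" using d0 k0 \<open>k0 = 0\<close> V0 by (simp add: mult_right_mono)
    also have "\<dots> \<le> (\<Sum>k\<in>{..<p}-{0}. \<bar>M 0 k\<bar> * \<bar>w k\<bar>)" using key p0 by simp
    also have "\<dots> \<le> (\<Sum>k\<in>{..<p}-{0}. \<bar>M 0 k\<bar> * (C * V / K))"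
    proof (rule sum_mono)
      fix k assume "k \<in> {..<p}-{0}"
      then show "\<bar>M 0 k\<bar> * \<bar>w k\<bar> \<le> \<bar>M 0 k\<bar> * (C * V / K)"
        using small[of k] by (intro mult_left_mono) auto
    qed
    also have "\<dots> = (\<Sum>k\<in>{..<p}-{0}. \<bar>M 0 k\<bar>) * (C * V / K)" by (rule sum_distrib_right[symmetric])
    also have "\<dots> \<le> C * (C * V / K)" using off p0 V0 K0 C0 by (intro mult_right_mono) auto
    finally have "\<mu> * V \<le> C * (C * V / K)" .
    then have "\<mu> * K * V \<le> C * C * V" using K0 by (simp add: field_simps)
    then have "\<mu> * K \<le> C * C" using Vp by simp
    then show ?thesis using CCK by simp
  qed
qed

lemma card_fibres:
  fixes g :: "'a \<Rightarrow> 'b"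
  assumes "finite F" "finite Cols" "\<forall>x\<in>F. g x \<in> Cols"
  shows "card F = (\<Sum>c\<in>Cols. card {x\<in>F. g x = c})"
proof -
  have "F = (\<Union>c\<in>Cols. {x\<in>F. g x = c})" using assms(3) by auto
  then have "card F = card (\<Union>c\<in>Cols. {x\<in>F. g x = c})" by simp
  also have "\<dots> = (\<Sum>c\<in>Cols. card {x\<in>F. g x = c})"
    by (rule card_UN_disjoint) (use assms in auto)
  finally show ?thesis .
qed

lemma distribute:
  fixes X :: "'a set" and Cols :: "'b set" and cap :: "'b \<Rightarrow> nat"
  assumes "finite X" "finite Cols" "card X \<le> (\<Sum>c\<in>Cols. cap c)"
  shows "\<exists>g. (\<forall>x\<in>X. g x \<in> Cols) \<and> (\<forall>c\<in>Cols. card {x\<in>X. g x = c} \<le> cap c)"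
  using assms(1,3)
proof (induction X rule: finite_induct)
  case empty then show ?case by auto
next
  case (insert x F)
  then have "card F \<le> (\<Sum>c\<in>Cols. cap c)" by simp
  with insert.IH obtain g where g: "\<forall>x\<in>F. g x \<in> Cols" "\<forall>c\<in>Cols. card {x\<in>F. g x = c} \<le> cap c"
    by blast
  have "\<exists>c\<in>Cols. card {x\<in>F. g x = c} < cap c"
  proof (rule ccontr)
    assume "\<not> ?thesis"
    then have "\<forall>c\<in>Cols. cap c \<le> card {x\<in>F. g x = c}" by auto
    then have "(\<Sum>c\<in>Cols. cap c) \<le> (\<Sum>c\<in>Cols. card {x\<in>F. g x = c})" by (intro sum_mono) auto
    also have "\<dots> = card F" using card_fibres[OF insert.hyps(1) assms(2) g(1)] by simp
    finally show False using insert by simp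
  qed
  then obtain c0 where c0: "c0 \<in> Cols" "card {x\<in>F. g x = c0} < cap c0" by blast
  define g' where "g' = g(x := c0)"
  have "\<forall>y\<in>insert x F. g' y \<in> Cols" using g c0 unfolding g'_def by auto
  moreover have "card {y\<in>insert x F. g' y = c} \<le> cap c" if c: "c \<in> Cols" for c
  proof (cases "c = c0")
    case True
    have "{y\<in>insert x F. g' y = c} = insert x {y\<in>F. g y = c}" using insert.hyps(2) True
      unfolding g'_def by auto
    then have "card {y\<in>insert x F. g' y = c} = Suc (card {y\<in>F. g y = c})"
      using insert.hyps by simp
    then show ?thesis using c0 True by simp
  next
    case False
    have "{y\<in>insert x F. g' y = c} = {y\<in>F. g y = c}" using insert.hyps(2) False
      unfolding g'_def by auto
    then show ?thesis using g c by simp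
  qed
  ultimately show ?case by blast
qed

definition resid :: "nat \<Rightarrow> (nat \<Rightarrow> nat \<Rightarrow> real) \<Rightarrow> (nat \<Rightarrow> real) \<Rightarrow> real \<Rightarrow> nat \<Rightarrow> real" where
  "resid p Z b a i = Z i p - (a + (\<Sum>k<p. b k * Z i k))"

definition covm :: "nat \<Rightarrow> (nat \<Rightarrow> nat \<Rightarrow> real) \<Rightarrow> (nat \<Rightarrow> real) \<Rightarrow> real \<Rightarrow> (nat \<Rightarrow> nat option)
    \<Rightarrow> nat set \<Rightarrow> (nat \<Rightarrow> nat) \<Rightarrow> real \<Rightarrow> nat option \<Rightarrow> nat \<Rightarrow> nat \<Rightarrow> real" where
  "covm p Z b a c F h K xy i k =
    (if c i = Some k then Z i k + resid p Z b a i / b k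
     else if xy = Some i \<and> k = 0 then Z i 0 + 1
     else if k \<in> F \<and> h k = i then Z 0 k + K
     else Z i k)"

definition contam :: "nat \<Rightarrow> nat \<Rightarrow> (nat \<Rightarrow> nat \<Rightarrow> real) \<Rightarrow> (nat \<Rightarrow> real) \<Rightarrow> real \<Rightarrow> (nat \<Rightarrow> nat option)
    \<Rightarrow> nat set \<Rightarrow> (nat \<Rightarrow> nat) \<Rightarrow> real \<Rightarrow> nat option \<Rightarrow> nat \<Rightarrow> nat \<Rightarrow> real" where
  "contam n p Z b a c F h K xy i k =
    (if n \<le> i \<or> p < k then Z i k
     else if k < p then covm p Z b a c F h K xy i k
     else if c i = Some p \<or> xy = Some i then a + (\<Sum>j<p. b j * covm p Z b a c F h K xy i j)
     else Z i p)"

lemma contam_cells: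
  assumes cnt: "\<forall>q\<le>p. card {i. i < n \<and> (c i = Some q \<or> (xy = Some i \<and> (q = 0 \<or> q = p)) \<or> (q \<in> F \<and> h q = i))} \<le> m"
  shows "cellwise_contaminated n p m Z (contam n p Z b a c F h K xy)"
  unfolding cellwise_contaminated_def
proof (intro conjI allI impI)
  fix i j assume "n \<le> i \<or> p < j"
  then show "contam n p Z b a c F h K xy i j = Z i j" by (simp add: contam_def)
next
  fix q assume q: "q \<le> p"
  have sub: "{i. i < n \<and> contam n p Z b a c F h K xy i q \<noteq> Z i q} \<subseteq>
     {i. i < n \<and> (c i = Some q \<or> (xy = Some i \<and> (q = 0 \<or> q = p)) \<or> (q \<in> F \<and> h q = i))}"
  proof
    fix i assume "i \<in> {i. i < n \<and> contam n p Z b a c F h K xy i q \<noteq> Z i q}"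
    then have i: "i < n" "contam n p Z b a c F h K xy i q \<noteq> Z i q" by auto
    show "i \<in> {i. i < n \<and> (c i = Some q \<or> (xy = Some i \<and> (q = 0 \<or> q = p)) \<or> (q \<in> F \<and> h q = i))}"
    proof (cases "q < p")
      case True
      then show ?thesis using i q by (auto simp: contam_def covm_def split: if_splits)
    next
      case False
      then have "q = p" using q by simp
      then show ?thesis using i by (auto simp: contam_def split: if_splits)
    qed
  qed
  have "card {i. i < n \<and> contam n p Z b a c F h K xy i q \<noteq> Z i q} \<le>
     card {i. i < n \<and> (c i = Some q \<or> (xy = Some i \<and> (q = 0 \<or> q = p)) \<or> (q \<in> F \<and> h q = i))}"
    by (rule card_mono[OF _ sub]) simp
  then show "card {i. i < n \<and> contam n p Z b a c F h K xy i q \<noteq> Z i q} \<le> m"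
    using cnt q by (meson le_trans)
qed

lemma contam_fit:
  assumes hc: "\<forall>i<n. \<forall>q. c i = Some q \<longrightarrow> q \<le> p \<and> (q < p \<longrightarrow> b q \<noteq> 0)"
    and hxy: "\<forall>i. xy = Some i \<longrightarrow> c i = None"
    and hF: "\<forall>k\<in>F. b k = 0"
    and hres: "\<forall>i<n. c i = None \<longrightarrow> xy \<noteq> Some i \<longrightarrow> resid p Z b a i = 0"
    and i: "i < n"
  shows "contam n p Z b a c F h K xy i p = a + (\<Sum>k<p. b k * contam n p Z b a c F h K xy i k)"
proof -
  have cv: "contam n p Z b a c F h K xy i k = covm p Z b a c F h K xy i k" if "k < p" for k
    using that i by (simp add: contam_def)
  have sumeq: "(\<Sum>k<p. b k * contam n p Z b a c F h K xy i k) = (\<Sum>k<p. b k * covm p Z b a c F h K xy i k)"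
    by (rule sum.cong) (auto simp: cv)
  show ?thesis
  proof (cases "c i = Some p \<or> xy = Some i")
    case True
    then show ?thesis using i sumeq by (simp add: contam_def)
  next
    case False
    then have cp: "contam n p Z b a c F h K xy i p = Z i p" using i by (simp add: contam_def)
    have nxy: "xy \<noteq> Some i" using False by simp
    show ?thesis
    proof (cases "c i")
      case None
      have eqk: "b k * covm p Z b a c F h K xy i k = b k * Z i k" for k
        using None nxy hF by (auto simp: covm_def)
      then have "(\<Sum>k<p. b k * covm p Z b a c F h K xy i k) = (\<Sum>k<p. b k * Z i k)"
        by (intro sum.cong refl eqk)
      moreover have "resid p Z b a i = 0" using hres i None nxy by simp
      ultimately show ?thesis using cp sumeq by (simp add: resid_def)
    next
      case (Some q)
      then have q: "q < p" "b q \<noteq> 0" using hc i False by (auto simp: le_less)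
      have "b k * covm p Z b a c F h K xy i k = b k * Z i k + (if k = q then resid p Z b a i else 0)" for k
        using Some nxy hF q by (auto simp: covm_def field_simps)
      then have "(\<Sum>k<p. b k * covm p Z b a c F h K xy i k) = (\<Sum>k<p. b k * Z i k) + resid p Z b a i"
        using q by (simp add: sum.distrib)
      then show ?thesis using cp sumeq by (simp add: resid_def)
    qed
  qed
qed

lemma sum_atMost_shift: "(\<Sum>k\<le>p. f k) = f 0 + (\<Sum>k<p. f (Suc k))" for f :: "nat \<Rightarrow> real"
  by (induction p) simp_all

lemma design_sum: "(\<Sum>k\<le>p. design p Z i k * g k) = g 0 + (\<Sum>k<p. Z i k * g (Suc k))"
  by (simp add: sum_atMost_shift design_def)

lemma contam_nondeg:
  fixes dir :: "nat \<Rightarrow> nat"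
  assumes p0: "0 < p" and n0: "0 < n"
    and anchor: "\<forall>k<p. covm p Z b a c F h K xy 0 k = Z 0 k"
    and dirn: "\<forall>q<p. dir q < n"
    and diag: "\<forall>q. 0 < q \<longrightarrow> q < p \<longrightarrow> K' \<le> \<bar>covm p Z b a c F h K xy (dir q) q - Z 0 q\<bar>"
    and d0: "\<mu> \<le> \<bar>covm p Z b a c F h K xy (dir 0) 0 - Z 0 0\<bar>"
    and off: "\<forall>q<p. (\<Sum>k\<in>{..<p}-{q}. \<bar>covm p Z b a c F h K xy (dir q) k - Z 0 k\<bar>) \<le> C"
    and CK: "C < K'" and CCK: "C * C < \<mu> * K'" and C0: "0 \<le> C" and mu0: "0 < \<mu>"
  shows "\<not> rows_in_proper_subspace n p (contam n p Z b a c F h K xy)"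
proof
  let ?Z' = "contam n p Z b a c F h K xy"
  assume "rows_in_proper_subspace n p ?Z'"
  then obtain v where v: "\<exists>k\<le>p. v k \<noteq> 0"
    and eqs: "\<forall>i<n. (\<Sum>k\<le>p. design p ?Z' i k * v k) = 0"
    unfolding rows_in_proper_subspace_def by blast
  define w where "w k = v (Suc k)" for k
  have eq2: "v 0 + (\<Sum>k<p. ?Z' i k * w k) = 0" if "i < n" for i
    using eqs that by (simp add: design_sum w_def)
  have z0: "?Z' 0 k = Z 0 k" if "k < p" for k
    using that n0 anchor by (simp add: contam_def)
  have e0: "v 0 + (\<Sum>k<p. Z 0 k * w k) = 0"
    using eq2[OF n0] z0 by simp
  define M where "M q k = covm p Z b a c F h K xy (dir q) k - Z 0 k" for q k
  have Meq: "\<forall>q<p. (\<Sum>k<p. M q k * w k) = 0"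
  proof (intro allI impI)
    fix q assume q: "q < p"
    have zq: "?Z' (dir q) k = covm p Z b a c F h K xy (dir q) k" if "k < p" for k
    proof -
      have "dir q < n" using dirn q by simp
      then show ?thesis using that by (simp add: contam_def)
    qed
    have "v 0 + (\<Sum>k<p. covm p Z b a c F h K xy (dir q) k * w k) = 0"
      using eq2[of "dir q"] dirn q zq by simp
    then have "(\<Sum>k<p. covm p Z b a c F h K xy (dir q) k * w k) - (\<Sum>k<p. Z 0 k * w k) = 0"
      using e0 by simp
    then show "(\<Sum>k<p. M q k * w k) = 0"
      by (simp add: M_def left_diff_distrib sum_subtractf)
  qed
  have "\<forall>k<p. w k = 0"
    by (rule block_dom[OF p0 Meq _ _ _ CK CCK C0 mu0]) (use diag d0 off in \<open>auto simp: M_def\<close>)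
  then have "v 0 = 0" using e0 by simp
  moreover have "v (Suc k) = 0" if "Suc k \<le> p" for k
    using \<open>\<forall>k<p. w k = 0\<close> that by (simp add: w_def)
  ultimately have "\<forall>k\<le>p. v k = 0" by (metis not0_implies_Suc)
  then show False using v by blast
qed

lemma coef_dist_ge:
  assumes "1 \<le> p"
  shows "\<bar>g 1 - h 1\<bar> \<le> coef_dist p g h"
proof -
  have "(g 1 - h 1)^2 \<le> (\<Sum>k\<le>p. (g k - h k)^2)"
    by (rule member_le_sum) (use assms in auto)
  then have "sqrt ((g 1 - h 1)^2) \<le> sqrt (\<Sum>k\<le>p. (g k - h k)^2)"
    by (rule real_sqrt_le_mono)
  then show ?thesis by (simp add: coef_dist_def)
qed

lemma exists_r:
  fixes D :: "nat \<Rightarrow> nat set" and P :: nat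
  shows "\<exists>r. r \<le> P \<and> (\<forall>q. 1 \<le> q \<longrightarrow> q \<le> r \<longrightarrow> q + 1 \<le> card (D (q - 1)))
            \<and> (r < P \<longrightarrow> card (D r) \<le> r + 1)"
proof -
  define S where "S = {r. r \<le> P \<and> (\<forall>q. 1 \<le> q \<longrightarrow> q \<le> r \<longrightarrow> q + 1 \<le> card (D (q - 1)))}"
  have fin: "finite S" unfolding S_def by (rule finite_subset[of _ "{..P}"]) auto
  have "0 \<in> S" unfolding S_def by auto
  then have ne: "S \<noteq> {}" by auto
  define r where "r = Max S"
  have rS: "r \<in> S" unfolding r_def using Max_in[OF fin ne] .
  have rmax: "\<And>s. s \<in> S \<Longrightarrow> s \<le> r" unfolding r_def using Max_ge[OF fin] by auto
  have "card (D r) \<le> r + 1" if "r < P"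
  proof (rule ccontr)
    assume "\<not> card (D r) \<le> r + 1"
    then have "Suc r + 1 \<le> card (D (Suc r - 1))" by simp
    then have "Suc r \<in> S" using rS that unfolding S_def
      by (auto simp: le_Suc_eq)
    then show False using rmax by fastforce
  qed
  then show ?thesis using rS unfolding S_def by blast
qed

lemma exists_f:
  fixes D :: "nat \<Rightarrow> nat set"
  assumes fin: "\<And>s. finite (D s)" and ne: "D 0 \<noteq> {}"
    and cardD: "\<forall>q. 1 \<le> q \<longrightarrow> q \<le> r \<longrightarrow> q + 1 \<le> card (D (q - 1))"
  shows "\<exists>f. inj_on f {0..r} \<and> f 0 \<in> D 0 \<and> (\<forall>q. 1 \<le> q \<longrightarrow> q \<le> r \<longrightarrow> f q \<in> D (q - 1))"
proof -
  have "\<forall>r'. r' \<le> r \<longrightarrow> (\<exists>f. inj_on f {0..r'} \<and> f 0 \<in> D 0 \<and> (\<forall>q. 1 \<le> q \<longrightarrow> q \<le> r' \<longrightarrow> f q \<in> D (q - 1)))"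
  proof (intro allI)
    fix r'
    show "r' \<le> r \<longrightarrow> (\<exists>f. inj_on f {0..r'} \<and> f 0 \<in> D 0 \<and> (\<forall>q. 1 \<le> q \<longrightarrow> q \<le> r' \<longrightarrow> f q \<in> D (q - 1)))"
    proof (induction r')
      case 0
      obtain x where "x \<in> D 0" using ne by auto
      then show ?case by (intro impI exI[of _ "\<lambda>_. x"]) auto
    next
      case (Suc r')
      show ?case
      proof
        assume le: "Suc r' \<le> r"
        then obtain f where f: "inj_on f {0..r'}" "f 0 \<in> D 0"
          "\<forall>q. 1 \<le> q \<longrightarrow> q \<le> r' \<longrightarrow> f q \<in> D (q - 1)"
          using Suc.IH by auto
        have "Suc r' + 1 \<le> card (D r')" using cardD le by (metis diff_Suc_1 le_add1 plus_1_eq_Suc)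
        moreover have "card (f ` {0..r'}) = Suc r'" using f(1) by (simp add: card_image)
        ultimately have "card (f ` {0..r'}) < card (D r')" by simp
        then have "\<not> D r' \<subseteq> f ` {0..r'}"
          using card_mono[of "f ` {0..r'}" "D r'"] by auto
        then obtain x where x: "x \<in> D r'" "x \<notin> f ` {0..r'}" by auto
        define f' where "f' = f(Suc r' := x)"
        have "inj_on f' {0..Suc r'}"
        proof -
          have "{0..Suc r'} = insert (Suc r') {0..r'}" by auto
          moreover have "inj_on f' {0..r'}" unfolding f'_def
            by (rule inj_on_fun_updI) (use f(1) x in \<open>auto simp: inj_on_def\<close>)
          moreover have "f' (Suc r') \<notin> f' ` ({0..r'} - {Suc r'})" using x unfolding f'_def by auto
          ultimately show ?thesis by simp
        qed
        moreover have "f' 0 \<in> D 0" using f(2) unfolding f'_def by simp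
        moreover have "\<forall>q. 1 \<le> q \<longrightarrow> q \<le> Suc r' \<longrightarrow> f' q \<in> D (q - 1)"
          using f(3) x unfolding f'_def by (auto simp: le_Suc_eq)
        ultimately show "\<exists>f. inj_on f {0..Suc r'} \<and> f 0 \<in> D 0 \<and> (\<forall>q. 1 \<le> q \<longrightarrow> q \<le> Suc r' \<longrightarrow> f q \<in> D (q - 1))"
          by blast
      qed
    qed
  qed
  then show ?thesis by blast
qed

lemma resid_eq:
  assumes "a = Z 0 p - (\<Sum>k<p. b k * Z 0 k)"
  shows "resid p Z b a i = (Z i p - Z 0 p) - (\<Sum>k<p. b k * (Z i k - Z 0 k))"
  using assms by (simp add: resid_def right_diff_distrib sum_subtractf)

lemma diag_eq:
  assumes "a = Z 0 p - (\<Sum>k<p. b k * Z 0 k)" and q: "q < p" and bq: "b q \<noteq> 0"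
  shows "Z i q + resid p Z b a i / b q - Z 0 q
    = ((Z i p - Z 0 p) - (\<Sum>k\<in>{..<p}-{q}. b k * (Z i k - Z 0 k))) / b q"
proof -
  have "(\<Sum>k<p. b k * (Z i k - Z 0 k)) = b q * (Z i q - Z 0 q) + (\<Sum>k\<in>{..<p}-{q}. b k * (Z i k - Z 0 k))"
    using q by (simp add: sum.remove)
  moreover have "resid p Z b a i = (Z i p - Z 0 p) - (\<Sum>k<p. b k * (Z i k - Z 0 k))"
    by (rule resid_eq) (rule assms(1))
  ultimately show ?thesis using bq by (simp add: field_simps)
qed

lemma tail_bound:
  fixes b d :: "nat \<Rightarrow> real"
  assumes eta: "0 < \<eta>" "\<eta> \<le> 1"
    and hb: "\<forall>k. 1 \<le> k \<longrightarrow> k \<le> r \<longrightarrow> b k = \<eta> ^ k" and hbz: "\<forall>k. r < k \<longrightarrow> b k = 0"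
    and A: "A \<subseteq> {..<p}" and Sd: "(\<Sum>k<p. \<bar>d k\<bar>) \<le> C"
  shows "\<bar>\<Sum>k\<in>A. (if j < k then b k * d k else 0)\<bar> \<le> \<eta> ^ Suc j * C"
proof -
  have finA: "finite A" using A finite_subset by blast
  have bk: "\<bar>b k\<bar> \<le> \<eta> ^ Suc j" if "j < k" for k
  proof (cases "k \<le> r")
    case True
    then have "b k = \<eta> ^ k" using hb that by simp
    moreover have "\<eta> ^ k \<le> \<eta> ^ Suc j" using eta that by (intro power_decreasing) auto
    ultimately show ?thesis using eta by simp
  next
    case False then show ?thesis using hbz eta by simp
  qed
  have "\<bar>\<Sum>k\<in>A. (if j < k then b k * d k else 0)\<bar> \<le> (\<Sum>k\<in>A. \<bar>if j < k then b k * d k else 0\<bar>)"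
    by (rule sum_abs)
  also have "\<dots> \<le> (\<Sum>k\<in>A. \<eta> ^ Suc j * \<bar>d k\<bar>)"
  proof (rule sum_mono)
    fix k assume "k \<in> A"
    show "\<bar>if j < k then b k * d k else 0\<bar> \<le> \<eta> ^ Suc j * \<bar>d k\<bar>"
      using bk[of k] eta by (auto simp: abs_mult intro: mult_right_mono)
  qed
  also have "\<dots> = \<eta> ^ Suc j * (\<Sum>k\<in>A. \<bar>d k\<bar>)" by (simp add: sum_distrib_left)
  also have "\<dots> \<le> \<eta> ^ Suc j * (\<Sum>k<p. \<bar>d k\<bar>)"
    using eta A by (intro mult_left_mono sum_mono2) auto
  also have "\<dots> \<le> \<eta> ^ Suc j * C" using eta Sd by (intro mult_left_mono) auto
  finally show ?thesis .
qed

lemma lead_split: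
  fixes b d :: "nat \<Rightarrow> real"
  assumes "finite A" "j \<in> A" "\<forall>k\<in>A. k < j \<longrightarrow> d k = 0"
  shows "(\<Sum>k\<in>A. b k * d k) = b j * d j + (\<Sum>k\<in>A. (if j < k then b k * d k else 0))"
proof -
  have "(\<Sum>k\<in>A. b k * d k) = (\<Sum>k\<in>A. (if k = j then b j * d j else 0) + (if j < k then b k * d k else 0))"
  proof (rule sum.cong)
    fix k assume "k \<in> A"
    then show "b k * d k = (if k = j then b j * d j else 0) + (if j < k then b k * d k else 0)"
      using assms(3) by (cases "k < j") auto
  qed simp
  also have "\<dots> = b j * d j + (\<Sum>k\<in>A. (if j < k then b k * d k else 0))"
    using assms by (simp add: sum.distrib sum.delta)
  finally show ?thesis .
qed

lemma bound_A:
  fixes b d :: "nat \<Rightarrow> real" and e :: real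
  assumes eta: "0 < \<eta>" "\<eta> \<le> 1"
    and hb0: "b 0 = t" and hb: "\<forall>k. 1 \<le> k \<longrightarrow> k \<le> r \<longrightarrow> b k = \<eta> ^ k" and hbz: "\<forall>k. r < k \<longrightarrow> b k = 0"
    and q: "1 \<le> q" "q \<le> r" "r < p"
    and Sd: "(\<Sum>k<p. \<bar>d k\<bar>) \<le> C" and eC: "\<bar>e\<bar> \<le> C"
    and tbig: "C + 1 \<le> t * \<delta>" and etaC: "\<eta> * C \<le> \<delta> / 2" and dpos: "0 < \<delta>" "\<delta> \<le> 1"
    and dlow: "\<forall>k<p. d k \<noteq> 0 \<longrightarrow> \<delta> \<le> \<bar>d k\<bar>" and elow: "e \<noteq> 0 \<longrightarrow> \<delta> \<le> \<bar>e\<bar>"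
    and mem: "e \<noteq> 0 \<or> (\<exists>k\<le>q - 1. d k \<noteq> 0)"
  shows "\<eta> ^ (q - 1) * \<delta> / 2 \<le> \<bar>e - (\<Sum>k\<in>{..<p}-{q}. b k * d k)\<bar>"
proof -
  let ?A = "{..<p}-{q}"
  have finA: "finite ?A" by simp
  have Asub: "?A \<subseteq> {..<p}" by auto
  have pq: "\<eta> ^ (q - 1) \<le> 1" using eta by (simp add: power_le_one)
  show ?thesis
  proof (cases "e \<noteq> 0 \<or> d 0 \<noteq> 0")
    case True
    have "0 \<in> ?A" using q by auto
    then have split: "(\<Sum>k\<in>?A. b k * d k) = t * d 0 + (\<Sum>k\<in>?A. (if 0 < k then b k * d k else 0))"
      using lead_split[OF finA, of 0 d b] hb0 by simp
    have tail: "\<bar>\<Sum>k\<in>?A. (if 0 < k then b k * d k else 0)\<bar> \<le> \<eta> * C"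
      using tail_bound[OF eta hb hbz Asub Sd, of 0] by simp
    have lead: "\<delta> \<le> \<bar>e - t * d 0\<bar>"
    proof (cases "d 0 = 0")
      case True then show ?thesis using \<open>e \<noteq> 0 \<or> d 0 \<noteq> 0\<close> elow by simp
    next
      case False
      then have "\<delta> \<le> \<bar>d 0\<bar>" using dlow q by simp
      have t0: "0 < t" using tbig dpos eC
        by (smt (verit, best) mult_nonpos_nonneg)
      have "t * \<delta> \<le> t * \<bar>d 0\<bar>" using \<open>\<delta> \<le> \<bar>d 0\<bar>\<close> t0 by simp
      moreover have "\<bar>t * d 0\<bar> = t * \<bar>d 0\<bar>" using t0 by (simp add: abs_mult)
      ultimately have "C + 1 \<le> \<bar>t * d 0\<bar>" using tbig by linarith
      then show ?thesis using eC dpos by linarith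
    qed
    have "\<delta> / 2 \<le> \<bar>e - (\<Sum>k\<in>?A. b k * d k)\<bar>"
      using split tail lead etaC by linarith
    moreover have "\<eta> ^ (q - 1) * \<delta> / 2 \<le> \<delta> / 2" using pq dpos by (simp add: mult_left_le_one_le)
    ultimately show ?thesis by linarith
  next
    case False
    then have e0: "e = 0" and d0: "d 0 = 0" by auto
    then obtain k0 where k0: "k0 \<le> q - 1" "d k0 \<noteq> 0" using mem by auto
    define j where "j = (LEAST k. d k \<noteq> 0)"
    have dj: "d j \<noteq> 0" unfolding j_def using k0(2) by (rule LeastI)
    have jle: "j \<le> k0" unfolding j_def using k0(2) by (rule Least_le)
    have below: "\<forall>k. k < j \<longrightarrow> d k = 0" unfolding j_def using not_less_Least by blast
    have j1: "1 \<le> j" using dj d0 by (cases j) auto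
    have jq: "j \<le> q - 1" using jle k0 by simp
    have jA: "j \<in> ?A" using jq q by auto
    have bj: "b j = \<eta> ^ j" using hb j1 jq q by simp
    have split: "(\<Sum>k\<in>?A. b k * d k) = \<eta> ^ j * d j + (\<Sum>k\<in>?A. (if j < k then b k * d k else 0))"
      using lead_split[OF finA jA, of d b] below bj by simp
    have tail: "\<bar>\<Sum>k\<in>?A. (if j < k then b k * d k else 0)\<bar> \<le> \<eta> ^ Suc j * C"
      using tail_bound[OF eta hb hbz Asub Sd, of j] by simp
    have lead: "\<eta> ^ j * \<delta> \<le> \<bar>\<eta> ^ j * d j\<bar>"
      using dlow dj jq q eta by (simp add: abs_mult)
    have "\<eta> ^ Suc j * C = \<eta> ^ j * (\<eta> * C)" by simp
    also have "\<dots> \<le> \<eta> ^ j * (\<delta> / 2)" using etaC eta by (intro mult_left_mono) auto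
    finally have tail2: "\<bar>\<Sum>k\<in>?A. (if j < k then b k * d k else 0)\<bar> \<le> \<eta> ^ j * (\<delta> / 2)"
      using tail by linarith
    have "\<eta> ^ j * (\<delta> / 2) \<le> \<bar>e - (\<Sum>k\<in>?A. b k * d k)\<bar>"
    proof -
      define X where "X = \<eta> ^ j * d j"
      define Y where "Y = (\<Sum>k\<in>?A. (if j < k then b k * d k else 0))"
      have "\<bar>X\<bar> - \<bar>Y\<bar> \<le> \<bar>e - (X + Y)\<bar>" using e0 by arith
      then show ?thesis using split tail2 lead unfolding X_def Y_def by linarith
    qed
    moreover have "\<eta> ^ (q - 1) \<le> \<eta> ^ j" using eta jq by (intro power_decreasing) auto
    then have "\<eta> ^ (q - 1) * \<delta> / 2 \<le> \<eta> ^ j * (\<delta> / 2)" using dpos by (simp add: mult_right_mono)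
    ultimately show ?thesis by linarith
  qed
qed

lemma bound_B:
  fixes b d :: "nat \<Rightarrow> real" and e :: real
  assumes eta: "0 < \<eta>" "\<eta> \<le> 1"
    and hb: "\<forall>k. 1 \<le> k \<longrightarrow> k \<le> r \<longrightarrow> b k = \<eta> ^ k" and hbz: "\<forall>k. r < k \<longrightarrow> b k = 0"
    and Sd: "(\<Sum>k<p. \<bar>d k\<bar>) \<le> C" and etaC: "\<eta> * C \<le> \<delta> / 2"
    and elow: "\<delta> \<le> \<bar>e\<bar>"
  shows "\<delta> / 2 \<le> \<bar>e - (\<Sum>k\<in>{..<p}-{0}. b k * d k)\<bar>"
proof -
  let ?A = "{..<p}-{0}"
  have "(\<Sum>k\<in>?A. b k * d k) = (\<Sum>k\<in>?A. (if 0 < k then b k * d k else 0))"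
    by (rule sum.cong) auto
  moreover have "\<bar>\<Sum>k\<in>?A. (if 0 < k then b k * d k else 0)\<bar> \<le> \<eta> * C"
    using tail_bound[OF eta hb hbz _ Sd, of ?A 0] by auto
  ultimately show ?thesis using etaC elow by linarith
qed

definition Dset :: "nat \<Rightarrow> nat \<Rightarrow> (nat \<Rightarrow> nat \<Rightarrow> real) \<Rightarrow> nat \<Rightarrow> nat set" where
  "Dset n p Z s = {i. 0 < i \<and> i < n \<and> (Z i p \<noteq> Z 0 p \<or> (\<exists>k\<le>s. Z i k \<noteq> Z 0 k))}"

lemma Dset_mono: "s \<le> s' \<Longrightarrow> Dset n p Z s \<subseteq> Dset n p Z s'"
  unfolding Dset_def by (auto intro: le_trans)

lemma Dset_fin: "finite (Dset n p Z s)"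
  unfolding Dset_def by (rule finite_subset[of _ "{..<n}"]) auto

lemma Dset_sub: "Dset n p Z s \<subseteq> {1..<n}"
  unfolding Dset_def by auto

definition goodsel where
  "goodsel n p Z m0 r f c xy \<longleftrightarrow>
     inj_on f {0..r} \<and> (\<forall>q\<le>r. 0 < f q \<and> f q < n)
   \<and> c 0 = None \<and> xy \<noteq> Some 0 \<and> (\<forall>i. xy = Some i \<longrightarrow> c i = None)
   \<and> (\<forall>i q. c i = Some q \<longrightarrow> q \<le> r \<or> q = p)
   \<and> (\<forall>i<n. c i = None \<longrightarrow> xy \<noteq> Some i \<longrightarrow> i \<notin> Dset n p Z r)
   \<and> (\<forall>q\<le>p. q \<notin> {Suc r..<p} \<longrightarrow>
        card {i. i < n \<and> (c i = Some q \<or> (xy = Some i \<and> (q = 0 \<or> q = p)))} \<le> m0)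
   \<and> (\<forall>q. 1 \<le> q \<longrightarrow> q \<le> r \<longrightarrow> c (f q) = Some q \<and> f q \<in> Dset n p Z (q - 1))
   \<and> ((c (f 0) = Some p \<and> Z (f 0) 0 \<noteq> Z 0 0)
      \<or> (c (f 0) = Some 0 \<and> Z (f 0) 0 = Z 0 0 \<and> Z (f 0) p \<noteq> Z 0 p)
      \<or> (xy = Some (f 0) \<and> Z (f 0) 0 = Z 0 0))
   \<and> (r < p - 1 \<longrightarrow> card (f ` {0..r} \<union> Dset n p Z r) \<le> r + 1)
   \<and> (\<forall>i. c i \<noteq> None \<or> xy = Some i \<longrightarrow> i \<in> f ` {0..r} \<union> Dset n p Z r)"

lemma sel_empty:
  assumes np: "p + 1 \<le> n" and p1: "1 \<le> p" and m01: "1 \<le> m0"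
    and r: "\<forall>q. 1 \<le> q \<longrightarrow> q \<le> r \<longrightarrow> q + 1 \<le> card (Dset n p Z (q - 1))"
    and E: "Dset n p Z 0 = {}"
  shows "\<exists>f c xy. goodsel n p Z m0 r f c xy"
proof -
  have r0: "r = 0"
  proof (rule ccontr)
    assume "r \<noteq> 0"
    then have "1 + 1 \<le> card (Dset n p Z (1 - 1))" using r[rule_format, of 1] by simp
    then show False using E by simp
  qed
  have n1: "1 < n" using np p1 by simp
  have z1: "Z 1 0 = Z 0 0" using E n1 unfolding Dset_def by auto
  have cnt: "card {i. i < n \<and> ((None::nat option) = Some q \<or> (Some 1 = Some i \<and> (q = 0 \<or> q = p)))} \<le> m0" for q
  proof -
    have "{i. i < n \<and> ((None::nat option) = Some q \<or> (Some 1 = Some i \<and> (q = 0 \<or> q = p)))} \<subseteq> {1}" by auto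
    then have "card {i. i < n \<and> ((None::nat option) = Some q \<or> (Some 1 = Some i \<and> (q = 0 \<or> q = p)))} \<le> card {1::nat}"
      by (rule card_mono[rotated]) simp
    then show ?thesis using m01 by simp
  qed
  show ?thesis
    apply (rule exI[of _ "\<lambda>_. 1"], rule exI[of _ "\<lambda>_. None"], rule exI[of _ "Some 1"])
    unfolding goodsel_def using r0 n1 z1 E cnt by (auto simp: inj_on_def)
qed

lemma sel_nonempty:
  assumes np: "p + 1 \<le> n" and p1: "1 \<le> p" and m01: "1 \<le> m0" and m0: "n - 1 \<le> (p + 1) * m0"
    and rle: "r \<le> p - 1"
    and r: "\<forall>q. 1 \<le> q \<longrightarrow> q \<le> r \<longrightarrow> q + 1 \<le> card (Dset n p Z (q - 1))"
    and stop: "r < p - 1 \<longrightarrow> card (Dset n p Z r) \<le> r + 1"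
    and NE: "Dset n p Z 0 \<noteq> {}"
  shows "\<exists>f c xy. goodsel n p Z m0 r f c xy"
proof -
  let ?D = "Dset n p Z"
  obtain f where f: "inj_on f {0..r}" "f 0 \<in> ?D 0" "\<forall>q. 1 \<le> q \<longrightarrow> q \<le> r \<longrightarrow> f q \<in> ?D (q - 1)"
    using exists_f[of ?D r, OF Dset_fin NE r] by blast
  have fD: "f q \<in> ?D r" if "q \<le> r" for q
  proof (cases "q = 0")
    case True then show ?thesis using f(2) Dset_mono[of 0 r] by auto
  next
    case False
    then have "f q \<in> ?D (q - 1)" using f(3) that by simp
    moreover have "?D (q - 1) \<subseteq> ?D r" using that by (intro Dset_mono) simp
    ultimately show ?thesis by blast
  qed
  have fimg: "f ` {0..r} \<subseteq> ?D r" using fD by auto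
  have fpos: "0 < f q \<and> f q < n" if "q \<le> r" for q using fD[OF that] unfolding Dset_def by auto
  define cf0 where "cf0 = (if Z (f 0) 0 \<noteq> Z 0 0 then p else 0)"
  define co where "co = (if Z (f 0) 0 \<noteq> Z 0 0 then 0 else p)"
  define X where "X = ?D r - f ` {0..r}"
  define Cols where "Cols = insert p {0..r}"
  define cap where "cap c' = (if c' = co then m0 else m0 - 1)" for c'
  have pr: "r < p" using rle p1 by simp
  have pCols: "p \<notin> {0..r}" using pr by simp
  have coCols: "co \<in> Cols" unfolding co_def Cols_def by auto
  have finX: "finite X" unfolding X_def using Dset_fin by simp
  have finCols: "finite Cols" unfolding Cols_def by simp
  have cardCols: "card Cols = r + 2" unfolding Cols_def using pCols by simp
  have sumcap: "(\<Sum>c\<in>Cols. cap c) = (r + 2) * (m0 - 1) + 1"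
  proof -
    have "(\<Sum>c\<in>Cols. cap c) = (\<Sum>c\<in>Cols. (m0 - 1) + (if c = co then 1 else 0))"
      by (rule sum.cong) (use m01 in \<open>auto simp: cap_def\<close>)
    also have "\<dots> = card Cols * (m0 - 1) + 1"
      using finCols coCols by (simp add: sum.distrib)
    finally show ?thesis using cardCols by simp
  qed
  have cardimg: "card (f ` {0..r}) = r + 1" using f(1) by (simp add: card_image)
  have cardX: "card X = card (?D r) - (r + 1)"
    unfolding X_def using card_Diff_subset[OF _ fimg] cardimg by simp
  have cardX_le: "card X \<le> (\<Sum>c\<in>Cols. cap c)"
  proof (cases "r < p - 1")
    case True
    then have "card (?D r) \<le> r + 1" using stop by simp
    then show ?thesis using cardX by simp
  next
    case False
    then have rp: "r = p - 1" using rle by simp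
    have "card (?D r) \<le> card {1..<n}" by (rule card_mono) (use Dset_sub in auto)
    then have "card (?D r) \<le> (r + 2) * m0" using m0 rp p1 by simp
    then have "card (?D r) - (r + 1) \<le> (r + 2) * (m0 - 1) + 1" using m01
      by (simp add: algebra_simps diff_mult_distrib2)
    then show ?thesis using cardX sumcap by simp
  qed
  obtain g where g: "\<forall>x\<in>X. g x \<in> Cols" "\<forall>c\<in>Cols. card {x\<in>X. g x = c} \<le> cap c"
    using distribute[OF finX finCols cardX_le] by blast
  define c where "c i = (if i = f 0 then Some cf0 else if i \<in> f ` {1..r} then Some (inv_into {1..r} f i)
      else if i \<in> X then Some (g i) else None)" for i
  have injr: "inj_on f {1..r}" using f(1) by (rule inj_on_subset) auto
  have cfq: "c (f q) = Some q" if "1 \<le> q" "q \<le> r" for q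
  proof -
    have "f q \<noteq> f 0"
    proof
      assume "f q = f 0"
      then have "q = 0" using f(1) that by (auto simp: inj_on_def)
      then show False using that by simp
    qed
    moreover have "f q \<in> f ` {1..r}" using that by auto
    moreover have "inv_into {1..r} f (f q) = q" using injr that by (simp add: inv_into_f_f)
    ultimately show ?thesis unfolding c_def by simp
  qed
  have Q1: "inj_on f {0..r} \<and> (\<forall>q\<le>r. 0 < f q \<and> f q < n)" using f(1) fpos by simp
  have zero_notD: "0 \<notin> ?D r" unfolding Dset_def by simp
  have Q2: "c 0 = None"
  proof -
    have "0 \<noteq> f 0" using fpos[of 0] by simp
    moreover have "0 \<notin> f ` {1..r}" using fpos by (metis atLeastAtMost_iff imageE less_irrefl)
    moreover have "0 \<notin> X" using zero_notD unfolding X_def by simp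
    ultimately show ?thesis unfolding c_def by simp
  qed
  have Q3: "\<forall>i q. c i = Some q \<longrightarrow> q \<le> r \<or> q = p"
  proof (intro allI impI)
    fix i q assume "c i = Some q"
    then show "q \<le> r \<or> q = p"
      using g(1) inv_into_into[of i f "{1..r}"] unfolding c_def cf0_def Cols_def
      by (auto split: if_splits)
  qed
  have fimg2: "f ` {0..r} = insert (f 0) (f ` {1..r})"
  proof -
    have "{0..r} = insert 0 {1..r}" by auto
    then show ?thesis by simp
  qed
  have Q4: "\<forall>i<n. c i = None \<longrightarrow> None \<noteq> Some i \<longrightarrow> i \<notin> ?D r"
  proof (intro allI impI)
    fix i assume "i < n" "c i = None"
    then have "i \<noteq> f 0" "i \<notin> f ` {1..r}" "i \<notin> X" unfolding c_def by (auto split: if_splits)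
    then show "i \<notin> ?D r" unfolding X_def using fimg2 by auto
  qed
  have Q5: "card {i. i < n \<and> (c i = Some q \<or> (None = Some i \<and> (q = 0 \<or> q = p)))} \<le> m0"
    if q: "q \<le> p" "q \<notin> {Suc r..<p}" for q
  proof -
    have qC: "q \<in> Cols" using q unfolding Cols_def by auto
    define A1 where "A1 = (if cf0 = q then {f 0} else {})"
    define A2 where "A2 = (if 1 \<le> q \<and> q \<le> r then {f q} else {})"
    define A3 where "A3 = {x\<in>X. g x = q}"
    have sub: "{i. i < n \<and> (c i = Some q \<or> (None = Some i \<and> (q = 0 \<or> q = p)))} \<subseteq> A1 \<union> A2 \<union> A3"
    proof
      fix i assume "i \<in> {i. i < n \<and> (c i = Some q \<or> (None = Some i \<and> (q = 0 \<or> q = p)))}"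
      then have ci: "c i = Some q" by auto
      show "i \<in> A1 \<union> A2 \<union> A3"
      proof (cases "i = f 0")
        case True then show ?thesis using ci unfolding c_def A1_def by auto
      next
        case False
        show ?thesis
        proof (cases "i \<in> f ` {1..r}")
          case True
          then obtain q' where q': "q' \<in> {1..r}" "i = f q'" by auto
          then have "c i = Some q'" using cfq by auto
          then have "q' = q" using ci by simp
          then show ?thesis using q' unfolding A2_def by auto
        next
          case False2: False
          then have "i \<in> X" "g i = q" using ci False unfolding c_def by (auto split: if_splits)
          then show ?thesis unfolding A3_def by auto
        qed
      qed
    qed
    have "card {i. i < n \<and> (c i = Some q \<or> (None = Some i \<and> (q = 0 \<or> q = p)))} \<le> card (A1 \<union> A2 \<union> A3)"
      by (rule card_mono[OF _ sub]) (auto simp: A1_def A2_def A3_def finX)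
    also have "\<dots> \<le> card A1 + card A2 + card A3"
      by (metis card_Un_le add_le_mono1 le_trans)
    also have "\<dots> \<le> m0"
    proof (cases "q = co")
      case True
      have "A1 = {}" using True p1 unfolding A1_def cf0_def co_def by auto
      moreover have "A2 = {}" using True pr unfolding A2_def co_def by auto
      moreover have "card A3 \<le> m0" using g(2) qC True unfolding A3_def cap_def by auto
      ultimately show ?thesis by simp
    next
      case False
      have "card A1 + card A2 \<le> 1"
        unfolding A1_def A2_def cf0_def using pr by auto
      moreover have "card A3 \<le> m0 - 1" using g(2) qC False unfolding A3_def cap_def by auto
      ultimately show ?thesis using m01 by simp
    qed
    finally show ?thesis .
  qed
  have Q7: "(c (f 0) = Some p \<and> Z (f 0) 0 \<noteq> Z 0 0)
      \<or> (c (f 0) = Some 0 \<and> Z (f 0) 0 = Z 0 0 \<and> Z (f 0) p \<noteq> Z 0 p)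
      \<or> (None = Some (f 0) \<and> Z (f 0) 0 = Z 0 0)"
  proof (cases "Z (f 0) 0 \<noteq> Z 0 0")
    case True then show ?thesis unfolding c_def cf0_def by simp
  next
    case False
    then have "Z (f 0) p \<noteq> Z 0 p" using f(2) unfolding Dset_def by auto
    then show ?thesis using False unfolding c_def cf0_def by simp
  qed
  have Q8: "r < p - 1 \<longrightarrow> card (f ` {0..r} \<union> ?D r) \<le> r + 1"
    using stop fimg by (simp add: Un_absorb1)
  have Q9: "\<forall>i. c i \<noteq> None \<or> None = Some i \<longrightarrow> i \<in> f ` {0..r} \<union> ?D r"
    unfolding c_def X_def using fimg2 by (auto split: if_splits)
  show ?thesis
    apply (rule exI[of _ f], rule exI[of _ c], rule exI[of _ None])
    unfolding goodsel_def
    using Q1 Q2 Q3 Q4 Q5 Q7 Q8 Q9 cfq f(3) by auto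
qed

lemma breaks_m0:
  fixes n p m0 :: nat and est :: "(nat \<Rightarrow> nat \<Rightarrow> real) \<Rightarrow> nat \<Rightarrow> real" and Z :: "nat \<Rightarrow> nat \<Rightarrow> real"
  assumes p1: "1 \<le> p" and np: "p + 1 \<le> n" and efp: "exact_fit_property n p est"
    and m0: "n - 1 \<le> (p + 1) * m0" and m01: "1 \<le> m0"
  shows "cellwise_breaks n p est Z m0"
  unfolding cellwise_breaks_def
proof
  fix B :: real
  define d where "d i k = Z i k - Z 0 k" for i k
  define Sset where "Sset = (\<lambda>(i, k). \<bar>d i k\<bar>) ` {(i, k). i < n \<and> k \<le> p \<and> d i k \<noteq> 0}"
  have finS: "finite Sset" unfolding Sset_def
    by (rule finite_imageI, rule finite_subset[of _ "{..<n} \<times> {..p}"]) auto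
  define \<delta> where "\<delta> = Min (Sset \<union> {1})"
  have dpos: "0 < \<delta>" unfolding \<delta>_def using finS by (auto simp: Sset_def)
  have d1: "\<delta> \<le> 1" unfolding \<delta>_def using finS by simp
  have dlow: "\<delta> \<le> \<bar>d i k\<bar>" if "i < n" "k \<le> p" "d i k \<noteq> 0" for i k
  proof -
    have "\<bar>d i k\<bar> \<in> Sset" unfolding Sset_def using that by force
    then show ?thesis unfolding \<delta>_def using finS by simp
  qed
  define C where "C = (\<Sum>i<n. \<Sum>k\<le>p. \<bar>d i k\<bar>)"
  have rowC: "(\<Sum>k\<le>p. \<bar>d i k\<bar>) \<le> C" if "i < n" for i
    unfolding C_def using that by (intro member_le_sum) (auto intro: sum_nonneg)
  have C0: "0 \<le> C" unfolding C_def by (intro sum_nonneg) auto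
  have rowC': "(\<Sum>k\<in>A. \<bar>d i k\<bar>) \<le> C" if "i < n" "A \<subseteq> {..p}" for i A
    using rowC[OF that(1)] sum_mono2[of "{..p}" A "\<lambda>k. \<bar>d i k\<bar>"] that by fastforce
  have Sd: "(\<Sum>k<p. \<bar>d i k\<bar>) \<le> C" if "i < n" for i
    using rowC'[OF that, of "{..<p}"] by fastforce
  have eC: "\<bar>d i p\<bar> \<le> C" if "i < n" for i
    using rowC'[OF that, of "{p}"] by auto
  define t where "t = \<bar>B\<bar> + \<bar>est Z 1\<bar> + (C + 1) / \<delta> + 1"
  have t1: "1 \<le> t" unfolding t_def using C0 dpos by (simp add: add_nonneg_nonneg)
  have tbig: "C + 1 \<le> t * \<delta>"
  proof -
    have "t * \<delta> = (\<bar>B\<bar> + \<bar>est Z 1\<bar> + 1) * \<delta> + (C + 1)" unfolding t_def using dpos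
      by (simp add: field_simps)
    moreover have "0 \<le> (\<bar>B\<bar> + \<bar>est Z 1\<bar> + 1) * \<delta>" using dpos by simp
    ultimately show ?thesis by linarith
  qed
  have tB: "B < \<bar>t - est Z 1\<bar>"
  proof -
    have "0 \<le> (C + 1) / \<delta>" using C0 dpos by simp
    then show ?thesis unfolding t_def by linarith
  qed
  define \<eta> where "\<eta> = \<delta>^2 / (8 * t * (C + 1)^2)"
  have eta0: "0 < \<eta>" unfolding \<eta>_def using dpos t1 C0 by simp
  have eta1: "\<eta> \<le> 1"
  proof -
    have "\<delta>^2 \<le> 1" using dpos d1 by (simp add: power_le_one)
    moreover have "1 \<le> 8 * t * (C + 1)^2"
    proof -
      have "1 \<le> (C + 1)^2" using C0 by (simp add: one_le_power)
      then show ?thesis using t1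
        by (metis dual_order.trans le_numeral_extra(4) mult_left_mono mult_le_cancel_right1
            mult_nonneg_nonneg not_one_le_zero one_le_numeral order.order_iff_strict)
    qed
    ultimately show ?thesis unfolding \<eta>_def by simp
  qed
  have etaC: "\<eta> * C \<le> \<delta> / 2"
  proof -
    have "\<eta> * C = \<delta>^2 * C / (8 * t * (C + 1)^2)" unfolding \<eta>_def by simp
    also have "\<dots> \<le> \<delta>^2 * (C + 1) / (8 * (C + 1)^2)"
    proof -
      have "\<delta>^2 * C \<le> \<delta>^2 * (C + 1)" using dpos by simp
      moreover have "8 * (C + 1)^2 \<le> 8 * t * (C + 1)^2" using t1 C0 by simp
      ultimately show ?thesis using C0 dpos
        by (intro frac_le) (auto intro: mult_nonneg_nonneg)
    qed
    also have "\<dots> = \<delta>^2 / (8 * (C + 1))" using C0 by (simp add: power2_eq_square)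
    also have "\<dots> \<le> \<delta> / 2"
    proof -
      have "\<delta>^2 \<le> \<delta>" using dpos d1 by (simp add: power2_eq_square mult_left_le_one_le)
      moreover have "2 \<le> 8 * (C + 1)" using C0 by simp
      ultimately show ?thesis using dpos C0 by (intro frac_le) auto
    qed
    finally show ?thesis .
  qed
  define K where "K = \<delta> / (2 * \<eta>)"
  define \<mu> where "\<mu> = \<delta> / (2 * t)"
  have KC: "C < K"
  proof -
    have "K = 4 * t * (C + 1)^2 / \<delta>" unfolding K_def \<eta>_def using dpos t1
      by (simp add: field_simps power2_eq_square)
    moreover have "4 * (C + 1)^2 \<le> 4 * t * (C + 1)^2" using t1 mult_right_mono[of 1 t "4 * (C+1)^2"] by simp
    moreover have "4 * (C + 1)^2 \<le> 4 * t * (C + 1)^2 / \<delta>"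
    proof -
      have "4 * t * (C + 1)^2 \<le> 4 * t * (C + 1)^2 / \<delta>" using dpos d1 t1 C0
        by (simp add: le_divide_eq mult_left_le_one_le)
      then show ?thesis using \<open>4 * (C + 1)^2 \<le> 4 * t * (C + 1)^2\<close> by linarith
    qed
    moreover have "C < 4 * (C + 1)^2"
    proof -
      have "(C + 1)^1 \<le> (C + 1)^2" using C0 by (intro power_increasing) auto
      then show ?thesis using C0 by simp
    qed
    ultimately show ?thesis by linarith
  qed
  have muK: "C * C < \<mu> * K"
  proof -
    have "\<mu> * K = 2 * (C + 1)^2" unfolding \<mu>_def K_def \<eta>_def using dpos t1
      by (simp add: field_simps power2_eq_square)
    moreover have "C * C < 2 * (C + 1)^2"
    proof -
      have "C^2 \<le> (C + 1)^2" using C0 by (intro power_mono) auto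
      moreover have "1 \<le> (C + 1)^2" using C0 by (simp add: one_le_power)
      ultimately show ?thesis by (simp add: power2_eq_square)
    qed
    ultimately show ?thesis by simp
  qed
  have mu0: "0 < \<mu>" unfolding \<mu>_def using dpos t1 by simp
  have mud: "\<mu> \<le> \<delta>" unfolding \<mu>_def using dpos t1 by (simp add: field_simps)
  have mu1: "\<mu> \<le> 1" using mud d1 by simp
  obtain r where rle: "r \<le> p - 1" and rcard: "\<forall>q. 1 \<le> q \<longrightarrow> q \<le> r \<longrightarrow> q + 1 \<le> card (Dset n p Z (q - 1))"
    and stop: "r < p - 1 \<longrightarrow> card (Dset n p Z r) \<le> r + 1"
    using exists_r[of "p - 1" "Dset n p Z"] by blast
  have pr: "r < p" using rle p1 by simp
  obtain f c xy where sel: "goodsel n p Z m0 r f c xy"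
    using sel_empty[OF np p1 m01 rcard] sel_nonempty[OF np p1 m01 m0 rle rcard stop] by blast
  note S = sel[unfolded goodsel_def]
  define b where "b k = (if k = 0 then t else if k \<le> r then \<eta> ^ k else 0)" for k
  define a where "a = Z 0 p - (\<Sum>k<p. b k * Z 0 k)"
  define F where "F = {Suc r..<p}"
  have rf: "resid p Z b a i = (Z i p - Z 0 p) - (\<Sum>k<p. b k * (Z i k - Z 0 k))" for i
    by (rule resid_eq) (rule a_def)
  have hb0: "b 0 = t" unfolding b_def by simp
  have hb: "\<forall>k. 1 \<le> k \<longrightarrow> k \<le> r \<longrightarrow> b k = \<eta> ^ k" unfolding b_def by simp
  have hbz: "\<forall>k. r < k \<longrightarrow> b k = 0" unfolding b_def by simp
  have bnz: "b q \<noteq> 0" if "q \<le> r" for q unfolding b_def using t1 eta0 that by simp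
  have hF: "\<forall>k\<in>F. b k = 0" unfolding F_def using hbz by simp

  let ?D = "Dset n p Z"
  define U where "U = f ` {0..r} \<union> ?D r"
  have S1: "inj_on f {0..r}" and fpos: "\<forall>q\<le>r. 0 < f q \<and> f q < n" using S by auto
  have S2: "c 0 = None" "xy \<noteq> Some 0" and xyc: "\<forall>i. xy = Some i \<longrightarrow> c i = None" using S by auto
  have S3: "\<forall>i q. c i = Some q \<longrightarrow> q \<le> r \<or> q = p" using S by auto
  have S4: "\<forall>i<n. c i = None \<longrightarrow> xy \<noteq> Some i \<longrightarrow> i \<notin> ?D r" using S by auto
  have S5: "\<forall>q\<le>p. q \<notin> {Suc r..<p} \<longrightarrow>
        card {i. i < n \<and> (c i = Some q \<or> (xy = Some i \<and> (q = 0 \<or> q = p)))} \<le> m0" using S by auto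
  have S6: "\<forall>q. 1 \<le> q \<longrightarrow> q \<le> r \<longrightarrow> c (f q) = Some q \<and> f q \<in> ?D (q - 1)" using S by auto
  have S7: "(c (f 0) = Some p \<and> Z (f 0) 0 \<noteq> Z 0 0)
      \<or> (c (f 0) = Some 0 \<and> Z (f 0) 0 = Z 0 0 \<and> Z (f 0) p \<noteq> Z 0 p)
      \<or> (xy = Some (f 0) \<and> Z (f 0) 0 = Z 0 0)" using S by auto
  have S8: "r < p - 1 \<longrightarrow> card U \<le> r + 1" using S unfolding U_def by auto
  have S9: "\<forall>i. c i \<noteq> None \<or> xy = Some i \<longrightarrow> i \<in> U" using S unfolding U_def by auto
  have finU: "finite U" unfolding U_def using Dset_fin by simp
  have "\<exists>h. h ` F \<subseteq> {1..<n} - U \<and> inj_on h F"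
  proof (cases "F = {}")
    case True then show ?thesis by simp
  next
    case False
    then have rp: "r < p - 1" unfolding F_def by auto
    have "card F = p - Suc r" unfolding F_def by simp
    also have "\<dots> \<le> card {1..<n} - card U" using S8 rp np by simp
    also have "\<dots> \<le> card ({1..<n} - U)" by (rule diff_card_le_card_Diff[OF finU])
    finally show ?thesis using card_le_inj[of F "{1..<n} - U"] unfolding F_def by simp
  qed
  then obtain h where h: "h ` F \<subseteq> {1..<n} - U" "inj_on h F" by blast
  have hF1: "0 < h k \<and> h k < n" if "k \<in> F" for k using h(1) that by auto
  have hF2: "c (h k) = None \<and> xy \<noteq> Some (h k)" if "k \<in> F" for k
    using h(1) that S9 by (metis Diff_iff image_subset_iff)
  have hF3: "h k \<notin> f ` {0..r}" if "k \<in> F" for k using h(1) that unfolding U_def by auto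
  have resid0: "resid p Z b a i = 0" if "i < n" "c i = None" "xy \<noteq> Some i" for i
  proof -
    have iD: "i \<notin> ?D r" using S4 that by simp
    have z: "d i p = 0 \<and> (\<forall>k\<le>r. d i k = 0)"
    proof (cases "i = 0")
      case True then show ?thesis by (simp add: d_def)
    next
      case False then show ?thesis using iD that(1) unfolding Dset_def d_def by auto
    qed
    have bz: "b k * (Z i k - Z 0 k) = 0" for k
    proof (cases "k \<le> r")
      case True then show ?thesis using z by (simp add: d_def)
    next
      case False then show ?thesis using hbz by simp
    qed
    have "(\<Sum>k<p. b k * (Z i k - Z 0 k)) = 0" by (simp only: bz sum.neutral_const)
    then show ?thesis using rf[of i] z by (simp add: d_def)
  qed
  define Z' where "Z' = contam n p Z b a c F h K xy"
  have contaminated: "cellwise_contaminated n p m0 Z Z'"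
    unfolding Z'_def
  proof (rule contam_cells, intro allI impI)
    fix q assume q: "q \<le> p"
    show "card {i. i < n \<and> (c i = Some q \<or> (xy = Some i \<and> (q = 0 \<or> q = p)) \<or> (q \<in> F \<and> h q = i))} \<le> m0"
    proof (cases "q \<in> F")
      case True
      have "{i. i < n \<and> (c i = Some q \<or> (xy = Some i \<and> (q = 0 \<or> q = p)) \<or> (q \<in> F \<and> h q = i))} \<subseteq> {h q}"
        using True S3 unfolding F_def by force
      then have "card {i. i < n \<and> (c i = Some q \<or> (xy = Some i \<and> (q = 0 \<or> q = p)) \<or> (q \<in> F \<and> h q = i))} \<le> card {h q}"
        by (rule card_mono[rotated]) simp
      then show ?thesis using m01 by simp
    next
      case False
      then have "{i. i < n \<and> (c i = Some q \<or> (xy = Some i \<and> (q = 0 \<or> q = p)) \<or> (q \<in> F \<and> h q = i))}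
          = {i. i < n \<and> (c i = Some q \<or> (xy = Some i \<and> (q = 0 \<or> q = p)))}" by auto
      moreover have "q \<notin> {Suc r..<p}" using False unfolding F_def .
      ultimately show ?thesis using S5 q by simp
    qed
  qed
  define g where "g k = (if k = 0 then a else b (k - 1))" for k
  have fit: "exact_fit n p Z' g"
    unfolding exact_fit_def
  proof (intro allI impI)
    fix i assume i: "i < n"
    have "Z' i p = a + (\<Sum>k<p. b k * Z' i k)"
      unfolding Z'_def
    proof (rule contam_fit[OF _ xyc hF _ i])
      show "\<forall>i<n. \<forall>q. c i = Some q \<longrightarrow> q \<le> p \<and> (q < p \<longrightarrow> b q \<noteq> 0)"
        using S3 bnz pr by fastforce
      show "\<forall>i<n. c i = None \<longrightarrow> xy \<noteq> Some i \<longrightarrow> resid p Z b a i = 0"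
        using resid0 by blast
    qed
    then show "Z' i p = (\<Sum>k\<le>p. design p Z' i k * g k)"
      by (simp add: design_sum g_def mult.commute)
  qed
  define dir where "dir q = (if q \<le> r then f q else h q)" for q
  have n0: "0 < n" using np by simp
  have p0: "0 < p" using p1 by simp
  have qF: "q \<in> F" if "r < q" "q < p" for q using that unfolding F_def by auto
  have f0c: "c (f 0) = Some p \<or> c (f 0) = Some 0 \<or> c (f 0) = None" using S7 xyc by auto
  have offrow: "covm p Z b a c F h K xy (dir q) k = Z (dir q) k" if q: "q < p" and k: "k < p" "k \<noteq> q" for q k
  proof (cases "q \<le> r")
    case True
    then have dq: "dir q = f q" unfolding dir_def by simp
    have nh: "\<not> (k \<in> F \<and> h k = f q)"
    proof
      assume "k \<in> F \<and> h k = f q"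
      then have "h k \<in> f ` {0..r}" using True by auto
      then show False using hF3 \<open>k \<in> F \<and> h k = f q\<close> by blast
    qed
    show ?thesis
    proof (cases "q = 0")
      case True
      then show ?thesis using dq nh f0c k by (auto simp: covm_def)
    next
      case False
      then have "c (f q) = Some q" using S6 \<open>q \<le> r\<close> by simp
      moreover then have "xy \<noteq> Some (f q)" using xyc by auto
      ultimately show ?thesis using dq nh k by (auto simp: covm_def)
    qed
  next
    case False
    then have qF': "q \<in> F" using qF q by simp
    have dq: "dir q = h q" using False unfolding dir_def by simp
    have "\<not> (k \<in> F \<and> h k = h q)" using h(2) qF' k by (auto simp: inj_on_def)
    then show ?thesis using dq hF2[OF qF'] by (auto simp: covm_def)
  qed
  have nondeg: "\<not> rows_in_proper_subspace n p Z'"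
    unfolding Z'_def
  proof (rule contam_nondeg[OF p0 n0, where dir = dir and K' = K and \<mu> = \<mu> and C = C])
    show "\<forall>k<p. covm p Z b a c F h K xy 0 k = Z 0 k"
      using S2 hF1 by (auto simp: covm_def) (metis less_irrefl)
    show "\<forall>q<p. dir q < n" using fpos hF1 qF unfolding dir_def by auto
    show "\<forall>q<p. (\<Sum>k\<in>{..<p}-{q}. \<bar>covm p Z b a c F h K xy (dir q) k - Z 0 k\<bar>) \<le> C"
    proof (intro allI impI)
      fix q assume q: "q < p"
      have dn: "dir q < n" using fpos hF1 qF q unfolding dir_def by auto
      have "(\<Sum>k\<in>{..<p}-{q}. \<bar>covm p Z b a c F h K xy (dir q) k - Z 0 k\<bar>) = (\<Sum>k\<in>{..<p}-{q}. \<bar>d (dir q) k\<bar>)"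
        by (rule sum.cong) (use offrow q in \<open>auto simp: d_def\<close>)
      also have "\<dots> \<le> C" using rowC'[OF dn, of "{..<p}-{q}"] by fastforce
      finally show "(\<Sum>k\<in>{..<p}-{q}. \<bar>covm p Z b a c F h K xy (dir q) k - Z 0 k\<bar>) \<le> C" .
    qed
    show "\<forall>q. 0 < q \<longrightarrow> q < p \<longrightarrow> K \<le> \<bar>covm p Z b a c F h K xy (dir q) q - Z 0 q\<bar>"
    proof (intro allI impI)
      fix q assume q: "0 < q" "q < p"
      show "K \<le> \<bar>covm p Z b a c F h K xy (dir q) q - Z 0 q\<bar>"
      proof (cases "q \<le> r")
        case True
        let ?i = "f q"
        have dq: "dir q = ?i" using True unfolding dir_def by simp
        have cq: "c ?i = Some q" and mem: "?i \<in> ?D (q - 1)" using S6 True q by auto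
        have iN: "?i < n" using fpos True by simp
        have bq: "b q = \<eta> ^ q" using hb True q by simp
        have cv: "covm p Z b a c F h K xy ?i q - Z 0 q = Z ?i q + resid p Z b a ?i / b q - Z 0 q"
          using cq by (simp add: covm_def)
        also have "\<dots> = ((Z ?i p - Z 0 p) - (\<Sum>k\<in>{..<p}-{q}. b k * (Z ?i k - Z 0 k))) / b q"
          by (rule diag_eq[where Z=Z and p=p and b=b and a=a and i="f q", OF a_def q(2) bnz[OF True]])
        finally have cv2: "covm p Z b a c F h K xy ?i q - Z 0 q =
            (d ?i p - (\<Sum>k\<in>{..<p}-{q}. b k * d ?i k)) / \<eta> ^ q" using bq by (simp add: d_def)
        have lb: "\<eta> ^ (q - 1) * \<delta> / 2 \<le> \<bar>d ?i p - (\<Sum>k\<in>{..<p}-{q}. b k * d ?i k)\<bar>"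
        proof (rule bound_A[OF eta0 eta1 hb0 hb hbz _ True pr Sd[OF iN] eC[OF iN] tbig etaC dpos d1])
          show "1 \<le> q" using q by simp
          show "\<forall>k<p. d ?i k \<noteq> 0 \<longrightarrow> \<delta> \<le> \<bar>d ?i k\<bar>" using dlow iN by simp
          show "d ?i p \<noteq> 0 \<longrightarrow> \<delta> \<le> \<bar>d ?i p\<bar>" using dlow iN by simp
          show "d ?i p \<noteq> 0 \<or> (\<exists>k\<le>q - 1. d ?i k \<noteq> 0)" using mem unfolding Dset_def d_def by auto
        qed
        have "K = (\<eta> ^ (q - 1) * \<delta> / 2) / \<eta> ^ q"
        proof -
          have "\<eta> ^ q = \<eta> ^ (q - 1) * \<eta>" using q by (metis Suc_diff_1 power_Suc2)
          then show ?thesis unfolding K_def using eta0 by (simp add: field_simps)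
        qed
        also have "\<dots> \<le> \<bar>d ?i p - (\<Sum>k\<in>{..<p}-{q}. b k * d ?i k)\<bar> / \<eta> ^ q"
          using divide_right_mono[OF lb, of "\<eta> ^ q"] eta0 by simp
        also have "\<dots> = \<bar>covm p Z b a c F h K xy ?i q - Z 0 q\<bar>"
          using cv2 eta0 by (simp add: abs_divide)
        finally show ?thesis using dq by simp
      next
        case False
        then have qF': "q \<in> F" using qF q by simp
        have "dir q = h q" using False unfolding dir_def by simp
        moreover have "covm p Z b a c F h K xy (h q) q = Z 0 q + K" using hF2[OF qF'] qF' by (simp add: covm_def)
        moreover have "0 < K" using KC C0 by simp
        ultimately show ?thesis by simp
      qed
    qed
    show "\<mu> \<le> \<bar>covm p Z b a c F h K xy (dir 0) 0 - Z 0 0\<bar>"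
    proof -
      let ?i = "f 0"
      have dq: "dir 0 = ?i" unfolding dir_def by simp
      have iN: "?i < n" using fpos by simp
      have nh: "\<not> (0 \<in> F)" unfolding F_def by simp
      show ?thesis
      proof (cases "c ?i = Some p \<and> Z ?i 0 \<noteq> Z 0 0")
        case True
        then have "xy \<noteq> Some ?i" using xyc by auto
        then have "covm p Z b a c F h K xy ?i 0 = Z ?i 0" using True nh p0 by (simp add: covm_def)
        moreover have "\<delta> \<le> \<bar>d ?i 0\<bar>" using dlow[OF iN, of 0] True by (simp add: d_def)
        ultimately show ?thesis using dq mud by (simp add: d_def)
      next
        case F1: False
        show ?thesis
        proof (cases "c ?i = Some 0 \<and> Z ?i 0 = Z 0 0 \<and> Z ?i p \<noteq> Z 0 p")
          case True
          have "covm p Z b a c F h K xy ?i 0 - Z 0 0 = Z ?i 0 + resid p Z b a ?i / b 0 - Z 0 0"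
            using True by (simp add: covm_def)
          also have "\<dots> = ((Z ?i p - Z 0 p) - (\<Sum>k\<in>{..<p}-{0}. b k * (Z ?i k - Z 0 k))) / b 0"
            by (rule diag_eq[where Z=Z and p=p and b=b and a=a and i="f 0", OF a_def p0 bnz]) simp
          finally have cv2: "covm p Z b a c F h K xy ?i 0 - Z 0 0 =
              (d ?i p - (\<Sum>k\<in>{..<p}-{0}. b k * d ?i k)) / t" using hb0 by (simp add: d_def)
          have lb: "\<delta> / 2 \<le> \<bar>d ?i p - (\<Sum>k\<in>{..<p}-{0}. b k * d ?i k)\<bar>"
            by (rule bound_B[OF eta0 eta1 hb hbz Sd[OF iN] etaC])
              (use dlow[OF iN, of p] True in \<open>simp add: d_def\<close>)
          have "\<mu> = (\<delta> / 2) / t" unfolding \<mu>_def by simp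
          also have "\<dots> \<le> \<bar>d ?i p - (\<Sum>k\<in>{..<p}-{0}. b k * d ?i k)\<bar> / t"
            using divide_right_mono[OF lb, of t] t1 by simp
          also have "\<dots> = \<bar>covm p Z b a c F h K xy ?i 0 - Z 0 0\<bar>"
            using cv2 t1 by (simp add: abs_divide)
          finally show ?thesis using dq by simp
        next
          case False
          then have xyi: "xy = Some ?i" "Z ?i 0 = Z 0 0" using S7 F1 by auto
          then have "c ?i = None" using xyc by simp
          then have "covm p Z b a c F h K xy ?i 0 = Z ?i 0 + 1" using xyi by (simp add: covm_def)
          then show ?thesis using dq xyi mu1 by simp
        qed
      qed
    qed
  qed (use KC muK C0 mu0 in auto)
  have estZ': "est Z' k = g k" if "k \<le> p" for k
    using efp fit nondeg that unfolding exact_fit_property_def by blast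
  have "est Z' 1 = t" using estZ'[of 1] p1 hb0 by (simp add: g_def)
  then have "B < coef_dist p (est Z') (est Z)"
    using tB coef_dist_ge[OF p1, of "est Z'" "est Z"] by simp
  then show "\<exists>Z'. cellwise_contaminated n p m0 Z Z' \<and> B < coef_dist p (est Z') (est Z)"
    using contaminated by blast
qed

theorem proposition3:
  fixes n p :: nat
    and est :: "(nat \<Rightarrow> nat \<Rightarrow> real) \<Rightarrow> nat \<Rightarrow> real"
    and Z :: "nat \<Rightarrow> nat \<Rightarrow> real"
  assumes "1 \<le> p" and "p + 1 \<le> n"
    and "exact_fit_property n p est"
  shows "(\<exists>m. cellwise_breaks n p est Z m) \<and>
         cellwise_breakdown n p est Z \<le> of_int \<lceil>(real n - 1) / (real p + 1)\<rceil> / real n"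
proof -
  define x where "x = (real n - 1) / (real p + 1)"
  define m0 where "m0 = nat \<lceil>x\<rceil>"
  have n2: "2 \<le> n" using assms by simp
  have xpos: "0 < x" unfolding x_def using n2 by (simp add: field_simps)
  have cpos: "1 \<le> \<lceil>x\<rceil>" using xpos by (simp add: one_le_ceiling)
  have rm0: "real m0 = of_int \<lceil>x\<rceil>" unfolding m0_def using cpos by simp
  have m01: "1 \<le> m0" unfolding m0_def using nat_mono[OF cpos] by simp
  have "x \<le> real m0" using rm0 by (simp add: le_of_int_ceiling)
  then have "real n - 1 \<le> (real p + 1) * real m0" unfolding x_def
    by (simp add: divide_le_eq mult.commute)
  then have "real (n - 1) \<le> real ((p + 1) * m0)" using n2 by (simp add: of_nat_diff algebra_simps)
  then have m0b: "n - 1 \<le> (p + 1) * m0" by (simp only: of_nat_le_iff)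
  have br: "cellwise_breaks n p est Z m0" by (rule breaks_m0[OF assms m0b m01])
  have "(LEAST m. cellwise_breaks n p est Z m) \<le> m0" by (rule Least_le) (rule br)
  then have "real (LEAST m. cellwise_breaks n p est Z m) / real n \<le> real m0 / real n"
    by (intro divide_right_mono) auto
  then show ?thesis using br rm0 unfolding cellwise_breakdown_def x_def by auto
qed


end
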